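(* Let $L\ge1$ and let $U\in\mathcal{U}$ satisfy $\operatorname{ind}(U)=0$ and $\operatorname{prop}(U)\le L$. Then there exist $V\in\mathrm{U}(B_0(2L))$ and $W\in\mathrm{U}(B_{-L}(2L))$ with $U=VW$.
   Context: Let $\ell^2(\mathbb{C})$ be the Hilbert space of square-summable complex sequences indexed by $\mathbb{Z}$, with standard orthonormal basis $\{e_i\}_{i\in\mathbb{Z}}$, and $\mathcal{B}$ the algebra of bounded operators on it. Each $T\in\mathcal{B}$ has matrix entries $T_{ij}=\langle e_i,Te_j\rangle$. The propagation is $\operatorname{prop}(T)=\sup\{|i-j|: T_{ij}\ne0\}$, and $\mathcal{U}$ denotes the set of unitary operators in $\mathcal{B}$ of finite propagation. The index of $U\in\mathcal{U}$ is $\operatorname{ind}(U)=\sum_{i<0,\,j\ge0}|U_{ij}|^2-\sum_{i\ge0,\,j<0}|U_{ij}|^2$ (a finite sum). For $k\in\mathbb{Z}$ and $M\ge1$, $B_k(M)=\{T\in\mathcal{B}: T_{ij}=0 \text{ unless } k+nM\le i,j<k+(n+1)M\text{ for some }n\in\mathbb{Z}\}$ is the algebra of block-diagonal operators with blocks of size $M$ starting at $k$, and $\mathrm{U}(B_k(M))$ is its group of unitary elements. *)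

theory Defs
  imports "HOL-Analysis.Analysis"
begin

text \<open>Operators on l2(Z) are represented by their matrices T i j = <e_i, T e_j>.\<close>

type_synonym zmat = "int \<Rightarrow> int \<Rightarrow> complex"

definition is_l2 :: "(int \<Rightarrow> complex) \<Rightarrow> bool" where
  "is_l2 x \<longleftrightarrow> (\<lambda>j. (cmod (x j))\<^sup>2) summable_on UNIV"

definition l2norm2 :: "(int \<Rightarrow> complex) \<Rightarrow> real" where
  "l2norm2 x = (\<Sum>\<^sub>\<infinity>j. (cmod (x j))\<^sup>2)"

definition apply_mat :: "zmat \<Rightarrow> (int \<Rightarrow> complex) \<Rightarrow> (int \<Rightarrow> complex)" where
  "apply_mat T x = (\<lambda>i. \<Sum>\<^sub>\<infinity>j. T i j * x j)"

definition bounded_op :: "zmat \<Rightarrow> bool" where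
  "bounded_op T \<longleftrightarrow> (\<exists>C. \<forall>x. is_l2 x \<longrightarrow>
      (\<forall>i. (\<lambda>j. T i j * x j) summable_on UNIV) \<and>
      is_l2 (apply_mat T x) \<and> l2norm2 (apply_mat T x) \<le> C * l2norm2 x)"

definition mmult :: "zmat \<Rightarrow> zmat \<Rightarrow> zmat" where
  "mmult A B = (\<lambda>i j. \<Sum>\<^sub>\<infinity>k. A i k * B k j)"

definition adj :: "zmat \<Rightarrow> zmat" where
  "adj T = (\<lambda>i j. cnj (T j i))"

definition idm :: zmat where
  "idm = (\<lambda>i j. if i = j then 1 else 0)"

definition unitary_op :: "zmat \<Rightarrow> bool" where
  "unitary_op T \<longleftrightarrow> bounded_op T \<and> mmult T (adj T) = idm \<and> mmult (adj T) T = idm"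

definition prop_le :: "zmat \<Rightarrow> int \<Rightarrow> bool" where
  "prop_le T L \<longleftrightarrow> (\<forall>i j. T i j \<noteq> 0 \<longrightarrow> \<bar>i - j\<bar> \<le> L)"

definition fp_unitaries :: "zmat set" where
  "fp_unitaries = {U. unitary_op U \<and> (\<exists>L. prop_le U L)}"

definition ind :: "zmat \<Rightarrow> real" where
  "ind U = (\<Sum>\<^sub>\<infinity>(i,j)\<in>{(i,j). i < 0 \<and> j \<ge> 0}. (cmod (U i j))\<^sup>2)
         - (\<Sum>\<^sub>\<infinity>(i,j)\<in>{(i,j). i \<ge> 0 \<and> j < 0}. (cmod (U i j))\<^sup>2)"

definition block_diag :: "int \<Rightarrow> int \<Rightarrow> zmat set" where
  "block_diag k M = {T. bounded_op T \<and>
     (\<forall>i j. T i j \<noteq> 0 \<longrightarrow> (\<exists>n::int. k + n*M \<le> i \<and> i < k + (n+1)*M \<and>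
                                     k + n*M \<le> j \<and> j < k + (n+1)*M))}"

definition unitary_block :: "int \<Rightarrow> int \<Rightarrow> zmat set" where
  "unitary_block k M = {T \<in> block_diag k M. unitary_op T}"

end

theory Submission
  imports Defs
begin


lemma infsum_fin:
  assumes "finite F" "\<And>k. k \<notin> F \<Longrightarrow> f k = 0"
  shows "infsum f UNIV = sum f F"
proof -
  have "infsum f UNIV = infsum f F"
    by (rule infsum_cong_neutral) (use assms in auto)
  also have "\<dots> = sum f F" using assms(1) by (rule infsum_finite)
  finally show ?thesis .
qed

lemma summable_fin:
  assumes "finite F" "\<And>k. k \<notin> F \<Longrightarrow> f k = 0"
  shows "f summable_on UNIV"
proof -
  have "f summable_on F" using assms(1) by (rule summable_on_finite)
  then show ?thesis
    by (subst summable_on_cong_neutral[where T=F and g=f]) (use assms in auto)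
qed

lemma prop_le_mono: "prop_le A a \<Longrightarrow> a \<le> b \<Longrightarrow> prop_le A b"
  unfolding prop_le_def by force

lemma prop_leD: "prop_le A a \<Longrightarrow> \<bar>i - j\<bar> > a \<Longrightarrow> A i j = 0"
  unfolding prop_le_def by force

lemma mmult_fin:
  assumes "prop_le A a" "finite F" "{i-a..i+a} \<subseteq> F"
  shows "mmult A B i j = (\<Sum>k\<in>F. A i k * B k j)"
  unfolding mmult_def
proof (rule infsum_fin[OF assms(2)])
  fix k assume "k \<notin> F"
  have "\<bar>i - k\<bar> > a"
  proof (rule ccontr)
    assume "\<not> \<bar>i - k\<bar> > a"
    then have "k \<in> {i-a..i+a}" by auto
    with assms(3) \<open>k \<notin> F\<close> show False by auto
  qed
  then show "A i k * B k j = 0" using prop_leD[OF assms(1)] by simp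
qed

lemma mmult_fin2:
  assumes "prop_le B b" "finite F" "{j-b..j+b} \<subseteq> F"
  shows "mmult A B i j = (\<Sum>k\<in>F. A i k * B k j)"
  unfolding mmult_def
proof (rule infsum_fin[OF assms(2)])
  fix k assume "k \<notin> F"
  have "\<bar>k - j\<bar> > b"
  proof (rule ccontr)
    assume "\<not> \<bar>k - j\<bar> > b"
    then have "k \<in> {j-b..j+b}" by auto
    with assms(3) \<open>k \<notin> F\<close> show False by auto
  qed
  then show "A i k * B k j = 0" using prop_leD[OF assms(1)] by simp
qed

lemma prop_adj: "prop_le A a \<Longrightarrow> prop_le (adj A) a"
  unfolding prop_le_def adj_def by (metis abs_minus_commute complex_cnj_zero_iff)

lemma adj_adj[simp]: "adj (adj A) = A"
  unfolding adj_def by simp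

lemma prop_mmult:
  assumes "prop_le A a" "prop_le B b"
  shows "prop_le (mmult A B) (a + b)"
  unfolding prop_le_def
proof (intro allI impI)
  fix i j assume nz: "mmult A B i j \<noteq> 0"
  have "mmult A B i j = (\<Sum>k\<in>{i-a..i+a}. A i k * B k j)"
    by (rule mmult_fin[OF assms(1)]) auto
  with nz obtain k where "A i k * B k j \<noteq> 0" by (metis (lifting) sum.neutral)
  then have "A i k \<noteq> 0" "B k j \<noteq> 0" by auto
  then have "\<bar>i - k\<bar> \<le> a" "\<bar>k - j\<bar> \<le> b" using assms unfolding prop_le_def by auto
  then show "\<bar>i - j\<bar> \<le> a + b" by linarith
qed

lemma prop_nonneg_ex: "prop_le A a \<Longrightarrow> \<exists>a'. a' \<ge> 0 \<and> prop_le A a'"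
  by (metis prop_le_mono max.cobounded1 max.cobounded2)

lemma mmult_assoc:
  assumes A: "prop_le A a" and B: "prop_le B b" and C: "prop_le C c"
    and a: "a \<ge> 0" and b: "b \<ge> 0" and c: "c \<ge> 0"
  shows "mmult (mmult A B) C = mmult A (mmult B C)"
proof (intro ext)
  fix i j
  define F where "F = {i - (a+b+c) .. i + (a+b+c)}"
  have fin: "finite F" unfolding F_def by simp
  have "mmult (mmult A B) C i j = (\<Sum>l\<in>F. mmult A B i l * C l j)"
    by (rule mmult_fin[OF prop_mmult[OF A B] fin]) (use a b c in \<open>auto simp: F_def\<close>)
  also have "\<dots> = (\<Sum>l\<in>F. (\<Sum>k\<in>F. A i k * B k l) * C l j)"
    by (intro sum.cong refl arg_cong2[where f="(*)"] mmult_fin[OF A fin]) (use a b c in \<open>auto simp: F_def\<close>)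
  also have "\<dots> = (\<Sum>k\<in>F. A i k * (\<Sum>l\<in>F. B k l * C l j))"
  proof -
    have "(\<Sum>l\<in>F. (\<Sum>k\<in>F. A i k * B k l) * C l j) = (\<Sum>l\<in>F. \<Sum>k\<in>F. A i k * B k l * C l j)"
      by (simp add: sum_distrib_right)
    also have "\<dots> = (\<Sum>k\<in>F. \<Sum>l\<in>F. A i k * B k l * C l j)"
      by (rule sum.swap)
    also have "\<dots> = (\<Sum>k\<in>F. A i k * (\<Sum>l\<in>F. B k l * C l j))"
      by (simp add: sum_distrib_left mult.assoc)
    finally show ?thesis .
  qed
  also have "\<dots> = (\<Sum>k\<in>F. A i k * mmult B C k j)"
  proof (intro sum.cong refl)
    fix k assume k: "k \<in> F"
    show "A i k * (\<Sum>l\<in>F. B k l * C l j) = A i k * mmult B C k j"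
    proof (cases "\<bar>i - k\<bar> \<le> a")
      case True
      then have "{k-b..k+b} \<subseteq> F" unfolding F_def using c by auto
      then show ?thesis by (simp add: mmult_fin[OF B fin])
    next
      case False
      then show ?thesis using prop_leD[OF A] by simp
    qed
  qed
  also have "\<dots> = mmult A (mmult B C) i j"
    by (rule mmult_fin[OF A fin, symmetric]) (use a b c in \<open>auto simp: F_def\<close>)
  finally show "mmult (mmult A B) C i j = mmult A (mmult B C) i j" .
qed

lemma adj_mmult:
  assumes A: "prop_le A a"
  shows "adj (mmult A B) = mmult (adj B) (adj A)"
proof (intro ext)
  fix i j
  have "adj (mmult A B) i j = cnj (\<Sum>k\<in>{j-a..j+a}. A j k * B k i)"
    unfolding adj_def by (subst mmult_fin[OF A]) auto
  also have "\<dots> = (\<Sum>k\<in>{j-a..j+a}. adj B i k * adj A k j)"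
    by (simp add: adj_def mult.commute)
  also have "\<dots> = mmult (adj B) (adj A) i j"
    by (rule mmult_fin2[OF prop_adj[OF A], symmetric]) auto
  finally show "adj (mmult A B) i j = mmult (adj B) (adj A) i j" .
qed

lemma mmult_idm_right[simp]: "mmult A idm = A"
proof (intro ext)
  fix i j
  have "mmult A idm i j = (\<Sum>k\<in>{j}. A i k * idm k j)"
    unfolding mmult_def by (rule infsum_fin) (auto simp: idm_def)
  then show "mmult A idm i j = A i j" by (simp add: idm_def)
qed

lemma mmult_idm_left[simp]: "mmult idm A = A"
proof (intro ext)
  fix i j
  have "mmult idm A i j = (\<Sum>k\<in>{i}. idm i k * A k j)"
    unfolding mmult_def by (rule infsum_fin) (auto simp: idm_def)
  then show "mmult idm A i j = A i j" by (simp add: idm_def)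
qed

lemma fsum_infsum:
  fixes f :: "'b \<Rightarrow> 'a \<Rightarrow> real"
  assumes "finite D" "\<And>d. d \<in> D \<Longrightarrow> f d summable_on A"
  shows "(\<lambda>i. \<Sum>d\<in>D. f d i) summable_on A \<and> infsum (\<lambda>i. \<Sum>d\<in>D. f d i) A = (\<Sum>d\<in>D. infsum (f d) A)"
  using assms
proof (induction D rule: finite_induct)
  case empty
  then show ?case by simp
next
  case (insert x F)
  then have s1: "f x summable_on A" and IH: "(\<lambda>i. \<Sum>d\<in>F. f d i) summable_on A"
    "infsum (\<lambda>i. \<Sum>d\<in>F. f d i) A = (\<Sum>d\<in>F. infsum (f d) A)" by auto
  have eq: "(\<lambda>i. \<Sum>d\<in>insert x F. f d i) = (\<lambda>i. f x i + (\<Sum>d\<in>F. f d i))"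
    using insert by simp
  show ?case unfolding eq
    using summable_on_add[OF s1 IH(1)] infsum_add[OF s1 IH(1)] IH(2) insert by simp
qed

lemma shift_summable:
  fixes h :: "int \<Rightarrow> real"
  shows "(\<lambda>i. h (i + d)) summable_on UNIV \<longleftrightarrow> h summable_on UNIV"
    and "(\<Sum>\<^sub>\<infinity>i. h (i + d)) = (\<Sum>\<^sub>\<infinity>i. h i)"
proof -
  have b: "bij_betw (\<lambda>i. i + d) UNIV UNIV"
    by (rule bij_betwI[where g="\<lambda>i. i - d"]) auto
  show "(\<lambda>i. h (i + d)) summable_on UNIV \<longleftrightarrow> h summable_on UNIV"
    using summable_on_reindex_bij_betw[OF b, of h] by simp
  show "(\<Sum>\<^sub>\<infinity>i. h (i + d)) = (\<Sum>\<^sub>\<infinity>i. h i)"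
    using infsum_reindex_bij_betw[OF b, of h] by simp
qed

lemma bounded_fp:
  assumes T: "prop_le T K" and K: "K \<ge> 0" and ent: "\<And>i j. cmod (T i j) \<le> 1"
  shows "bounded_op T"
proof -
  define D where "D = {-K..K}"
  define c where "c = real (card D)"
  have finD: "finite D" unfolding D_def by simp
  have c0: "c \<ge> 0" unfolding c_def by simp
  have main: "(\<forall>i. (\<lambda>j. T i j * x j) summable_on UNIV) \<and>
      is_l2 (apply_mat T x) \<and> l2norm2 (apply_mat T x) \<le> (c * c) * l2norm2 x"
    if x: "is_l2 x" for x
  proof -
    have hx: "(\<lambda>j. (cmod (x j))\<^sup>2) summable_on UNIV" using x unfolding is_l2_def .
    have rows: "(\<lambda>j. T i j * x j) summable_on UNIV" for i
    proof (rule summable_fin[of "{i-K..i+K}"])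
      fix k assume "k \<notin> {i-K..i+K}"
      then have "\<bar>i - k\<bar> > K" by auto
      then show "T i k * x k = 0" using prop_leD[OF T] by simp
    qed simp
    have ap: "apply_mat T x i = (\<Sum>d\<in>D. T i (i+d) * x (i+d))" for i
    proof -
      have "apply_mat T x i = (\<Sum>j\<in>{i-K..i+K}. T i j * x j)"
        unfolding apply_mat_def
      proof (rule infsum_fin)
        fix k assume "k \<notin> {i-K..i+K}"
        then have "\<bar>i - k\<bar> > K" by auto
        then show "T i k * x k = 0" using prop_leD[OF T] by simp
      qed simp
      also have "\<dots> = (\<Sum>d\<in>D. T i (i+d) * x (i+d))"
      proof -
        have "{i-K..i+K} = (\<lambda>d. i + d) ` D" unfolding D_def
          by (auto simp: image_iff intro!: exI[where x="_ - i"])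
        then show ?thesis by (simp add: sum.reindex)
      qed
      finally show ?thesis .
    qed
    define g where "g i = c * (\<Sum>d\<in>D. (cmod (x (i+d)))\<^sup>2)" for i
    have bound: "(cmod (apply_mat T x i))\<^sup>2 \<le> g i" for i
    proof -
      have "cmod (apply_mat T x i) \<le> (\<Sum>d\<in>D. cmod (T i (i+d) * x (i+d)))"
        unfolding ap by (rule norm_sum)
      also have "\<dots> \<le> (\<Sum>d\<in>D. cmod (x (i+d)))"
      proof (rule sum_mono)
        fix d
        have "cmod (T i (i+d)) * cmod (x (i+d)) \<le> 1 * cmod (x (i+d))"
          by (rule mult_right_mono[OF ent]) simp
        then show "cmod (T i (i+d) * x (i+d)) \<le> cmod (x (i+d))" by (simp add: norm_mult)
      qed
      finally have le: "cmod (apply_mat T x i) \<le> (\<Sum>d\<in>D. cmod (x (i+d)))" .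
      have "(cmod (apply_mat T x i))\<^sup>2 \<le> (\<Sum>d\<in>D. cmod (x (i+d)))\<^sup>2"
        by (rule power_mono[OF le]) simp
      also have "\<dots> \<le> (\<Sum>d\<in>D. (cmod (x (i+d)))\<^sup>2) * c"
        unfolding c_def by (rule sum_squared_le_sum_of_squares)
      finally show ?thesis unfolding g_def by (simp add: mult.commute)
    qed
    have sh: "(\<lambda>i. (cmod (x (i+d)))\<^sup>2) summable_on UNIV" for d
      using shift_summable(1)[of "\<lambda>j. (cmod (x j))\<^sup>2" d] hx by simp
    note fs = fsum_infsum[OF finD, of "\<lambda>d i. (cmod (x (i+d)))\<^sup>2" UNIV]
    have gs: "g summable_on UNIV"
      unfolding g_def by (rule summable_on_cmult_right) (use fs sh in auto)
    have gi: "infsum g UNIV = c * (c * l2norm2 x)"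
    proof -
      have "infsum g UNIV = c * infsum (\<lambda>i. \<Sum>d\<in>D. (cmod (x (i+d)))\<^sup>2) UNIV"
        unfolding g_def by (rule infsum_cmult_right') 
      also have "\<dots> = c * (\<Sum>d\<in>D. (\<Sum>\<^sub>\<infinity>i. (cmod (x (i+d)))\<^sup>2))"
        using fs sh by simp
      also have "\<dots> = c * (\<Sum>d\<in>D. l2norm2 x)"
        unfolding l2norm2_def using shift_summable(2)[of "\<lambda>j. (cmod (x j))\<^sup>2"] by simp
      finally show ?thesis unfolding c_def by simp
    qed
    have s2: "(\<lambda>i. (cmod (apply_mat T x i))\<^sup>2) summable_on UNIV"
      by (rule summable_on_comparison_test[OF gs]) (use bound in auto)
    have "l2norm2 (apply_mat T x) \<le> infsum g UNIV"
      unfolding l2norm2_def by (rule infsum_mono[OF s2 gs bound])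
    then show ?thesis using rows s2 gi unfolding is_l2_def by (simp add: mult.assoc)
  qed
  show ?thesis unfolding bounded_op_def using main by blast
qed



lemma cnj_mult_self: "cnj z * z = complex_of_real ((cmod z)\<^sup>2)"
  by (metis complex_norm_square mult.commute of_real_power)

lemma mult_cnj_self: "z * cnj z = complex_of_real ((cmod z)\<^sup>2)"
  by (metis complex_norm_square of_real_power)

lemma entry_le1:
  assumes T: "prop_le T K" and u: "mmult (adj T) T = idm"
  shows "cmod (T i j) \<le> 1"
proof (cases "\<bar>i - j\<bar> \<le> K")
  case False
  then show ?thesis using prop_leD[OF T] by simp
next
  case True
  have "1 = mmult (adj T) T j j" using u by (simp add: idm_def)
  also have "\<dots> = (\<Sum>k\<in>{j-K..j+K}. adj T j k * T k j)"
    by (rule mmult_fin2[OF T]) auto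
  also have "\<dots> = (\<Sum>k\<in>{j-K..j+K}. complex_of_real ((cmod (T k j))\<^sup>2))"
    unfolding adj_def by (intro sum.cong refl) (simp only: cnj_mult_self)
  finally have s1: "(\<Sum>k\<in>{j-K..j+K}. (cmod (T k j))\<^sup>2) = 1"
    by (metis of_real_eq_1_iff of_real_sum)
  have "i \<in> {j-K..j+K}" using True by auto
  then have "(cmod (T i j))\<^sup>2 \<le> (\<Sum>k\<in>{j-K..j+K}. (cmod (T k j))\<^sup>2)"
    by (intro member_le_sum) auto
  then have "(cmod (T i j))\<^sup>2 \<le> 1" using s1 by simp
  then show ?thesis by (simp add: power_le_one_iff)
qed

definition ip :: "int set \<Rightarrow> (int \<Rightarrow> complex) \<Rightarrow> (int \<Rightarrow> complex) \<Rightarrow> complex" where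
  "ip D x y = (\<Sum>a\<in>D. cnj (x a) * y a)"

definition proj :: "int set \<Rightarrow> (int \<Rightarrow> complex) set \<Rightarrow> (int \<Rightarrow> complex) \<Rightarrow> (int \<Rightarrow> complex)" where
  "proj D S y = (\<lambda>a. \<Sum>f\<in>S. f a * ip D f y)"

definition orthn :: "int set \<Rightarrow> (int \<Rightarrow> complex) set \<Rightarrow> bool" where
  "orthn D S \<longleftrightarrow> (\<forall>f\<in>S. \<forall>g\<in>S. ip D f g = (if f = g then 1 else 0))"

definition rapp :: "int set \<Rightarrow> zmat \<Rightarrow> (int \<Rightarrow> complex) \<Rightarrow> (int \<Rightarrow> complex)" where
  "rapp D R f = (\<lambda>a. \<Sum>b\<in>D. R a b * f b)"

lemma ip_cnj: "ip D x y = cnj (ip D y x)"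
  unfolding ip_def by (simp add: mult.commute)

lemma ip_proj:
  "ip D h (proj D S y) = (\<Sum>g\<in>S. ip D h g * ip D g y)"
proof -
  have "ip D h (proj D S y) = (\<Sum>a\<in>D. \<Sum>g\<in>S. cnj (h a) * g a * ip D g y)"
    unfolding ip_def proj_def by (simp add: sum_distrib_left mult.assoc)
  also have "\<dots> = (\<Sum>g\<in>S. \<Sum>a\<in>D. cnj (h a) * g a * ip D g y)"
    by (rule sum.swap)
  also have "\<dots> = (\<Sum>g\<in>S. ip D h g * ip D g y)"
    unfolding ip_def by (simp add: sum_distrib_right)
  finally show ?thesis .
qed

lemma ip_proj_mem:
  assumes "finite S" "orthn D S" "h \<in> S"
  shows "ip D h (proj D S y) = ip D h y"
proof -
  have "ip D h (proj D S y) = (\<Sum>g\<in>S. (if h = g then ip D g y else 0))"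
    unfolding ip_proj using assms(2,3) unfolding orthn_def by (intro sum.cong refl) auto
  also have "\<dots> = ip D h y" using assms(1,3) by (simp add: sum.delta)
  finally show ?thesis .
qed

lemma ip_diff: "ip D h (\<lambda>a. x a - y a) = ip D h x - ip D h y"
  unfolding ip_def by (simp add: right_diff_distrib sum_subtractf)

lemma ip_cong: "(\<And>a. a \<in> D \<Longrightarrow> y a = y' a) \<Longrightarrow> ip D h y = ip D h y'"
  unfolding ip_def by simp

lemma ip_cong_left: "(\<And>a. a \<in> D \<Longrightarrow> y a = y' a) \<Longrightarrow> ip D y h = ip D y' h"
  unfolding ip_def by simp

lemma ip_self: "ip D w w = complex_of_real (\<Sum>a\<in>D. (cmod (w a))\<^sup>2)"
  unfolding ip_def by (simp add: cnj_mult_self)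

lemma ip_self_zero:
  assumes "finite D" "ip D w w = 0" "a \<in> D" shows "w a = 0"
proof -
  have "(\<Sum>a\<in>D. (cmod (w a))\<^sup>2) = 0" using assms(2) unfolding ip_self by (simp only: of_real_eq_0_iff)
  then have "(cmod (w a))\<^sup>2 = 0" using assms(1,3) sum_nonneg_eq_0_iff[of D "\<lambda>a. (cmod (w a))\<^sup>2"] by auto
  then show ?thesis by simp
qed

lemma ip_selfadj:
  assumes herm: "\<And>a b. a \<in> D \<Longrightarrow> b \<in> D \<Longrightarrow> R b a = cnj (R a b)"
  shows "ip D (rapp D R f) g = ip D f (rapp D R g)"
proof -
  have "ip D (rapp D R f) g = (\<Sum>a\<in>D. \<Sum>b\<in>D. cnj (R a b) * cnj (f b) * g a)"
    unfolding ip_def rapp_def by (simp add: sum_distrib_right)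
  also have "\<dots> = (\<Sum>a\<in>D. \<Sum>b\<in>D. R b a * cnj (f b) * g a)"
    by (intro sum.cong refl) (subst herm, auto)
  also have "\<dots> = (\<Sum>b\<in>D. \<Sum>a\<in>D. R b a * cnj (f b) * g a)" by (rule sum.swap)
  also have "\<dots> = (\<Sum>b\<in>D. cnj (f b) * (\<Sum>a\<in>D. R b a * g a))"
    by (intro sum.cong refl) (simp add: sum_distrib_left mult_ac)
  also have "\<dots> = ip D f (rapp D R g)"
    unfolding ip_def rapp_def by simp
  finally show ?thesis .
qed

lemma gs_main:
  assumes finD: "finite D" and herm: "\<And>a b. a \<in> D \<Longrightarrow> b \<in> D \<Longrightarrow> R b a = cnj (R a b)"
    and idem: "\<And>a b. a \<in> D \<Longrightarrow> b \<in> D \<Longrightarrow> (\<Sum>c\<in>D. R a c * R c b) = R a b"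
    and C: "finite C" "C \<subseteq> D"
  shows "\<exists>S. finite S \<and> orthn D S \<and> (\<forall>f\<in>S. \<forall>a\<in>D. rapp D R f a = f a) \<and>
           (\<forall>c\<in>C. \<forall>a\<in>D. proj D S (\<lambda>b. R b c) a = R a c)"
  using C
proof (induction C rule: finite_induct)
  case empty
  show ?case by (rule exI[of _ "{}"]) (simp add: orthn_def)
next
  case (insert c C)
  then obtain S where fS: "finite S" and oS: "orthn D S" and rS: "\<forall>f\<in>S. \<forall>a\<in>D. rapp D R f a = f a"
    and pS: "\<forall>c'\<in>C. \<forall>a\<in>D. proj D S (\<lambda>b. R b c') a = R a c'" by auto
  have cD: "c \<in> D" using insert by auto
  define x where "x = (\<lambda>b. R b c)"
  define w where "w = (\<lambda>a. x a - proj D S x a)"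
  have ipw: "ip D g w = 0" if "g \<in> S" for g
    unfolding w_def ip_diff ip_proj_mem[OF fS oS that] by simp
  have ipw': "ip D w g = 0" if "g \<in> S" for g
    using ipw[OF that] ip_cnj[of D w g] by simp
  have rx: "rapp D R x a = x a" if "a \<in> D" for a
    unfolding rapp_def x_def using idem[OF that cD] .
  have rP: "rapp D R (proj D S x) a = proj D S x a" if "a \<in> D" for a
  proof -
    have "rapp D R (proj D S x) a = (\<Sum>b\<in>D. \<Sum>f\<in>S. R a b * f b * ip D f x)"
      unfolding rapp_def proj_def by (simp add: sum_distrib_left mult.assoc)
    also have "\<dots> = (\<Sum>f\<in>S. \<Sum>b\<in>D. R a b * f b * ip D f x)" by (rule sum.swap)
    also have "\<dots> = (\<Sum>f\<in>S. rapp D R f a * ip D f x)"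
      unfolding rapp_def by (simp add: sum_distrib_right)
    also have "\<dots> = proj D S x a"
      unfolding proj_def using rS that by simp
    finally show ?thesis .
  qed
  have rw: "rapp D R w a = w a" if "a \<in> D" for a
  proof -
    have "rapp D R w a = rapp D R x a - rapp D R (proj D S x) a"
      unfolding rapp_def w_def by (simp add: right_diff_distrib sum_subtractf)
    then show ?thesis using rx[OF that] rP[OF that] unfolding w_def by simp
  qed
  show ?case
  proof (cases "ip D w w = 0")
    case True
    then have w0: "w a = 0" if "a \<in> D" for a using ip_self_zero[OF finD _ that] by simp
    show ?thesis
    proof (intro exI[of _ S] conjI fS oS rS ballI)
      fix c' a assume c': "c' \<in> insert c C" and a: "a \<in> D"
      show "proj D S (\<lambda>b. R b c') a = R a c'"
      proof (cases "c' = c")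
        case True
        then show ?thesis using w0[OF a] unfolding w_def x_def by simp
      next
        case False
        then show ?thesis using pS c' a by auto
      qed
    qed
  next
    case False
    define n where "n = (\<Sum>a\<in>D. (cmod (w a))\<^sup>2)"
    have wwn: "ip D w w = complex_of_real n" unfolding n_def by (rule ip_self)
    have n0: "n \<ge> 0" unfolding n_def by (intro sum_nonneg) simp
    have npos: "n > 0" using n0 False wwn by force
    define s where "s = sqrt n"
    have spos: "s > 0" unfolding s_def using npos by simp
    have ss: "s * s = n" unfolding s_def using n0 by simp
    define f0 where "f0 = (\<lambda>a. w a / complex_of_real s)"
    have ipf0L: "ip D f0 y = ip D w y / complex_of_real s" for y
      unfolding ip_def f0_def by (simp add: sum_divide_distrib)
    have ipf0R: "ip D g f0 = ip D g w / complex_of_real s" for g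
      unfolding ip_def f0_def by (simp add: sum_divide_distrib)
    have f0f0: "ip D f0 f0 = 1"
      unfolding ipf0L ipf0R wwn using spos ss
      by (simp add: field_simps) (metis of_real_mult)
    have gf0: "ip D g f0 = 0" if "g \<in> S" for g using ipw[OF that] ipf0R by simp
    have f0g: "ip D f0 g = 0" if "g \<in> S" for g using ipw'[OF that] ipf0L by simp
    have f0S: "f0 \<notin> S" using gf0 f0f0 by force
    define S' where "S' = insert f0 S"
    have fS': "finite S'" unfolding S'_def using fS by simp
    have oS': "orthn D S'"
      unfolding orthn_def S'_def
    proof (intro ballI)
      fix f g assume f: "f \<in> insert f0 S" and g: "g \<in> insert f0 S"
      show "ip D f g = (if f = g then 1 else 0)"
      proof (cases "f = f0")
        case True
        then show ?thesis using g f0f0 f0g f0S by auto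
      next
        case False
        then have fS1: "f \<in> S" using f by auto
        show ?thesis
        proof (cases "g = f0")
          case True
          then show ?thesis using gf0[OF fS1] fS1 f0S by auto
        next
          case False
          then show ?thesis using oS fS1 g unfolding orthn_def by auto
        qed
      qed
    qed
    have rf0: "rapp D R f0 a = f0 a" if "a \<in> D" for a
    proof -
      have "rapp D R f0 a = rapp D R w a / complex_of_real s"
        unfolding rapp_def f0_def by (simp add: sum_divide_distrib)
      then show ?thesis using rw[OF that] unfolding f0_def by simp
    qed
    have projS': "proj D S' y a = proj D S y a + f0 a * ip D f0 y" for y a
      unfolding proj_def S'_def using fS f0S by simp
    show ?thesis
    proof (intro exI[of _ S'] conjI fS' oS' ballI)
      fix f a assume "f \<in> S'" "a \<in> D"
      then show "rapp D R f a = f a" using rS rf0 unfolding S'_def by auto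
    next
      fix c' a assume c': "c' \<in> insert c C" and a: "a \<in> D"
      show "proj D S' (\<lambda>b. R b c') a = R a c'"
      proof (cases "c' = c")
        case True
        have "ip D w w = ip D w x - ip D w (proj D S x)"
          unfolding w_def[of] by (simp add: ip_diff[symmetric] w_def)
        moreover have "ip D w (proj D S x) = 0"
          unfolding ip_proj using ipw' by simp
        ultimately have "ip D w x = complex_of_real n" using wwn by simp
        then have "ip D f0 x = complex_of_real s"
          unfolding ipf0L using spos ss by (simp add: field_simps) (metis of_real_mult)
        then have "f0 a * ip D f0 x = w a" unfolding f0_def using spos by simp
        then show ?thesis using True projS'[of x a] unfolding w_def x_def by simp
      next
        case False
        then have c'C: "c' \<in> C" using c' by auto
        have "ip D f0 (\<lambda>b. R b c') = ip D f0 (proj D S (\<lambda>b. R b c'))"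
          by (rule ip_cong) (use pS c'C in auto)
        also have "\<dots> = 0" unfolding ip_proj using f0g by simp
        finally show ?thesis using projS' pS c'C a by simp
      qed
    qed
  qed
qed

lemma gs_res:
  assumes finD: "finite D" and herm: "\<And>a b. a \<in> D \<Longrightarrow> b \<in> D \<Longrightarrow> R b a = cnj (R a b)"
    and idem: "\<And>a b. a \<in> D \<Longrightarrow> b \<in> D \<Longrightarrow> (\<Sum>c\<in>D. R a c * R c b) = R a b"
  shows "\<exists>S. finite S \<and> orthn D S \<and> (\<forall>f\<in>S. \<forall>a\<in>D. rapp D R f a = f a) \<and>
           (\<forall>a\<in>D. \<forall>b\<in>D. R a b = (\<Sum>f\<in>S. f a * cnj (f b))) \<and>
           of_nat (card S) = (\<Sum>a\<in>D. R a a)"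
proof -
  obtain S where fS: "finite S" and oS: "orthn D S" and rS: "\<forall>f\<in>S. \<forall>a\<in>D. rapp D R f a = f a"
    and pS: "\<forall>c\<in>D. \<forall>a\<in>D. proj D S (\<lambda>b. R b c) a = R a c"
    using gs_main[OF finD herm idem finD subset_refl] by blast
  have col: "ip D f (\<lambda>x. R x b) = cnj (f b)" if f: "f \<in> S" and b: "b \<in> D" for f b
  proof -
    have "ip D f (\<lambda>x. R x b) = (\<Sum>x\<in>D. cnj (f x) * R x b)" unfolding ip_def ..
    also have "\<dots> = (\<Sum>x\<in>D. cnj (R b x * f x))"
      by (intro sum.cong refl) (subst herm[OF b], auto)
    also have "\<dots> = cnj (rapp D R f b)" unfolding rapp_def by simp
    finally show ?thesis using rS f b by simp
  qed
  have res: "R a b = (\<Sum>f\<in>S. f a * cnj (f b))" if a: "a \<in> D" and b: "b \<in> D" for a b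
  proof -
    have "R a b = proj D S (\<lambda>x. R x b) a" using pS a b by simp
    also have "\<dots> = (\<Sum>f\<in>S. f a * cnj (f b))" unfolding proj_def using col b by simp
    finally show ?thesis .
  qed
  have "(\<Sum>a\<in>D. R a a) = (\<Sum>a\<in>D. \<Sum>f\<in>S. f a * cnj (f a))"
    using res by simp
  also have "\<dots> = (\<Sum>f\<in>S. \<Sum>a\<in>D. f a * cnj (f a))" by (rule sum.swap)
  also have "\<dots> = (\<Sum>f\<in>S. ip D f f)" unfolding ip_def by (simp add: mult.commute)
  also have "\<dots> = (\<Sum>f\<in>S. 1)" using oS unfolding orthn_def by simp
  finally have "of_nat (card S) = (\<Sum>a\<in>D. R a a)" by simp
  then show ?thesis using fS oS rS res by blast
qed

lemma block_basis:
  assumes finD: "finite D" and cardD: "card D = 2 * m"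
    and herm: "\<And>a b. a \<in> D \<Longrightarrow> b \<in> D \<Longrightarrow> R b a = cnj (R a b)"
    and idem: "\<And>a b. a \<in> D \<Longrightarrow> b \<in> D \<Longrightarrow> (\<Sum>c\<in>D. R a c * R c b) = R a b"
    and tr: "(\<Sum>a\<in>D. R a a) = of_nat m"
  shows "\<exists>c :: nat \<Rightarrow> int \<Rightarrow> complex.
     (\<forall>p<2*m. \<forall>q<2*m. ip D (c p) (c q) = (if p = q then 1 else 0)) \<and>
     (\<forall>a\<in>D. \<forall>b\<in>D. (\<Sum>p\<in>{0..<2*m}. c p a * cnj (c p b)) = (if a = b then 1 else 0)) \<and>
     (\<forall>p<m. \<forall>a\<in>D. rapp D R (c p) a = c p a) \<and>
     (\<forall>p. m \<le> p \<and> p < 2*m \<longrightarrow> (\<forall>a\<in>D. rapp D R (c p) a = 0))"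
proof -
  define R' where "R' = (\<lambda>a b. (if a = b then 1 else 0) - R a b)"
  have herm': "R' b a = cnj (R' a b)" if "a \<in> D" "b \<in> D" for a b
    unfolding R'_def using herm[OF that] by auto
  have idem': "(\<Sum>c\<in>D. R' a c * R' c b) = R' a b" if a: "a \<in> D" and b: "b \<in> D" for a b
  proof -
    have "(\<Sum>c\<in>D. R' a c * R' c b) = (\<Sum>c\<in>D. (if a = c then (if c = b then 1 else 0) - R c b else 0)
           - (if c = b then R a c else 0) + R a c * R c b)"
      unfolding R'_def by (intro sum.cong refl) (auto simp: algebra_simps)
    also have "\<dots> = ((if a = b then 1 else 0) - R a b) - R a b + R a b"
      using a b finD by (simp add: sum.distrib sum_subtractf idem)
    finally show ?thesis unfolding R'_def by simp
  qed
  have tr': "(\<Sum>a\<in>D. R' a a) = of_nat m"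
  proof -
    have "(\<Sum>a\<in>D. R' a a) = (\<Sum>a\<in>D. 1 - R a a)" unfolding R'_def by simp
    also have "\<dots> = of_nat (card D) - of_nat m" using tr by (simp add: sum_subtractf)
    finally show ?thesis using cardD by simp
  qed
  obtain S where fS: "finite S" and oS: "orthn D S" and rS: "\<forall>f\<in>S. \<forall>a\<in>D. rapp D R f a = f a"
    and resS: "\<forall>a\<in>D. \<forall>b\<in>D. R a b = (\<Sum>f\<in>S. f a * cnj (f b))"
    and cS: "of_nat (card S) = (\<Sum>a\<in>D. R a a)"
    using gs_res[OF finD herm idem] by blast
  obtain T where fT: "finite T" and oT: "orthn D T" and rT: "\<forall>f\<in>T. \<forall>a\<in>D. rapp D R' f a = f a"
    and resT: "\<forall>a\<in>D. \<forall>b\<in>D. R' a b = (\<Sum>f\<in>T. f a * cnj (f b))"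
    and cT: "of_nat (card T) = (\<Sum>a\<in>D. R' a a)"
    using gs_res[OF finD herm' idem'] by blast
  have cardS: "card S = m" using cS tr by (metis of_nat_eq_iff)
  have cardT: "card T = m" using cT tr' by (metis of_nat_eq_iff)
  have rT0: "rapp D R g a = 0" if g: "g \<in> T" and a: "a \<in> D" for g a
  proof -
    have "rapp D R' g a = (\<Sum>b\<in>D. (if a = b then g b else 0)) - rapp D R g a"
    proof -
      have "rapp D R' g a = (\<Sum>b\<in>D. (if a = b then g b else 0) - R a b * g b)"
        unfolding rapp_def R'_def by (intro sum.cong refl) (auto simp: algebra_simps)
      then show ?thesis unfolding rapp_def by (simp add: sum_subtractf)
    qed
    also have "\<dots> = g a - rapp D R g a" using a finD by simp
    finally show ?thesis using rT g a by simp
  qed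
  have cross: "ip D f g = 0" if f: "f \<in> S" and g: "g \<in> T" for f g
  proof -
    have "ip D f g = ip D (rapp D R f) g" by (rule ip_cong_left) (use rS f in auto)
    also have "\<dots> = ip D f (rapp D R g)" by (rule ip_selfadj[OF herm])
    also have "\<dots> = ip D f (\<lambda>_. 0)" by (rule ip_cong) (use rT0 g in auto)
    finally show ?thesis unfolding ip_def by simp
  qed
  obtain \<phi> where \<phi>: "bij_betw \<phi> {0..<m} S" using ex_bij_betw_nat_finite[OF fS] cardS by auto
  obtain \<psi> where \<psi>: "bij_betw \<psi> {0..<m} T" using ex_bij_betw_nat_finite[OF fT] cardT by auto
  define c where "c = (\<lambda>p. if p < m then \<phi> p else \<psi> (p - m))"
  have cS: "c p \<in> S" if "p < m" for p using that \<phi> unfolding c_def bij_betw_def by auto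
  have cT: "c p \<in> T" if "m \<le> p" "p < 2*m" for p using that \<psi> unfolding c_def bij_betw_def by auto
  have C1: "ip D (c p) (c q) = (if p = q then 1 else 0)" if p: "p < 2*m" and q: "q < 2*m" for p q
  proof (cases "p < m")
    case pT: True
    show ?thesis
    proof (cases "q < m")
      case True
      have "c p = c q \<longleftrightarrow> p = q" using \<phi> pT True unfolding c_def bij_betw_def inj_on_def by auto
      then show ?thesis using oS cS[OF pT] cS[OF True] unfolding orthn_def by auto
    next
      case False
      then show ?thesis using cross[OF cS[OF pT] cT] q pT by auto
    qed
  next
    case pF: False
    show ?thesis
    proof (cases "q < m")
      case True
      have "ip D (c p) (c q) = cnj (ip D (c q) (c p))" by (rule ip_cnj)
      then show ?thesis using cross[OF cS[OF True] cT] p pF True by auto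
    next
      case False
      have inj: "inj_on \<psi> {0..<m}" using \<psi> unfolding bij_betw_def by simp
      have "\<psi> (p - m) = \<psi> (q - m) \<Longrightarrow> p - m = q - m"
        using inj_onD[OF inj] p q by auto
      then have "c p = c q \<longleftrightarrow> p = q" using pF False unfolding c_def by auto
      then show ?thesis using oT cT[of p] cT[of q] pF False p q unfolding orthn_def by auto
    qed
  qed
  have C2: "(\<Sum>p\<in>{0..<2*m}. c p a * cnj (c p b)) = (if a = b then 1 else 0)" if a: "a \<in> D" and b: "b \<in> D" for a b
  proof -
    have "(\<Sum>p\<in>{0..<2*m}. c p a * cnj (c p b)) = (\<Sum>p\<in>{0..<m}. c p a * cnj (c p b)) + (\<Sum>p\<in>{m..<2*m}. c p a * cnj (c p b))"
      by (rule sum.atLeastLessThan_concat[symmetric]) auto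
    also have "(\<Sum>p\<in>{0..<m}. c p a * cnj (c p b)) = (\<Sum>p\<in>{0..<m}. \<phi> p a * cnj (\<phi> p b))"
      unfolding c_def by simp
    also have "\<dots> = (\<Sum>f\<in>S. f a * cnj (f b))" by (rule sum.reindex_bij_betw[OF \<phi>])
    also have "(\<Sum>p\<in>{m..<2*m}. c p a * cnj (c p b)) = (\<Sum>p\<in>{0+m..<m+m}. c p a * cnj (c p b))" by (simp add: mult_2)
    also have "\<dots> = (\<Sum>p\<in>{0..<m}. c (p+m) a * cnj (c (p+m) b))" by (rule sum.shift_bounds_nat_ivl)
    also have "\<dots> = (\<Sum>p\<in>{0..<m}. \<psi> p a * cnj (\<psi> p b))" unfolding c_def by simp
    also have "\<dots> = (\<Sum>f\<in>T. f a * cnj (f b))" by (rule sum.reindex_bij_betw[OF \<psi>])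
    finally have eq: "(\<Sum>p\<in>{0..<2*m}. c p a * cnj (c p b)) = (\<Sum>f\<in>S. f a * cnj (f b)) + (\<Sum>f\<in>T. f a * cnj (f b))" .
    have e1: "(\<Sum>f\<in>S. f a * cnj (f b)) = R a b" using resS a b by simp
    have e2: "(\<Sum>f\<in>T. f a * cnj (f b)) = R' a b" using resT a b by simp
    show ?thesis unfolding eq e1 e2 R'_def by simp
  qed
  have C3: "rapp D R (c p) a = c p a" if "p < m" "a \<in> D" for p a
    using rS cS[OF that(1)] that(2) by blast
  have C4: "rapp D R (c p) a = 0" if "m \<le> p" "p < 2*m" "a \<in> D" for p a
    using rT0[OF cT[OF that(1,2)] that(3)] .
  show ?thesis
    apply (rule exI[of _ c])
    apply (intro conjI allI impI ballI)
    using C1 C2 C3 C4 by auto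
qed



lemma div_iff_int:
  fixes k n M :: int
  assumes "M > 0"
  shows "k div M = n \<longleftrightarrow> M * n \<le> k \<and> k < M * n + M"
proof -
  have M0: "M \<noteq> 0" using assms by simp
  have e: "(k + (-n) * M) div M = -n + k div M" by (rule div_mult_self1[OF M0])
  have "k div M = n \<longleftrightarrow> (k + (-n) * M) div M = 0" unfolding e by linarith
  also have "\<dots> \<longleftrightarrow> 0 \<le> k + (-n) * M \<and> k + (-n) * M < M"
    unfolding zdiv_eq_0_iff using assms by auto
  finally show ?thesis by (auto simp: algebra_simps)
qed

lemma ivl_split_int:
  fixes a b c :: int
  assumes "a \<le> b" "b \<le> c"
  shows "sum f {a..<c} = sum f {a..<b} + sum f {b..<c}"
proof -
  have "{a..<c} = {a..<b} \<union> {b..<c}" using assms by auto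
  then show ?thesis by (simp add: sum.union_disjoint)
qed

locale qw =
  fixes U :: zmat and L :: int
  assumes L1: "L \<ge> 1" and pU: "prop_le U L" and uu: "mmult U (adj U) = idm"
    and uu': "mmult (adj U) U = idm"
begin

definition M :: int where "M = 2 * L"
definition J :: "int \<Rightarrow> int set" where "J n = {M*n ..< M*n + M}"
definition I :: "int \<Rightarrow> int set" where "I n = {M*n - L ..< M*n + L}"
definition Q :: "int \<Rightarrow> zmat" where "Q n a b = (\<Sum>k\<in>I n. U a k * cnj (U b k))"

lemma Mpos: "M > 0" unfolding M_def using L1 by simp

lemma finJ[simp]: "finite (J n)" unfolding J_def by simp
lemma finI[simp]: "finite (I n)" unfolding I_def by simp

lemma row:
  assumes "finite F" "{i-L..i+L} \<subseteq> F"
  shows "(\<Sum>k\<in>F. U i k * cnj (U j k)) = idm i j"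
proof -
  have "mmult U (adj U) i j = (\<Sum>k\<in>F. U i k * adj U k j)" by (rule mmult_fin[OF pU assms])
  then show ?thesis using uu by (simp add: adj_def)
qed

lemma col:
  assumes "finite F" "{i-L..i+L} \<subseteq> F"
  shows "(\<Sum>k\<in>F. cnj (U k i) * U k j) = idm i j"
proof -
  have "mmult (adj U) U i j = (\<Sum>k\<in>F. adj U i k * U k j)" by (rule mmult_fin[OF prop_adj[OF pU] assms])
  then show ?thesis using uu' by (simp add: adj_def)
qed

lemma zeroU: "\<bar>a - b\<bar> > L \<Longrightarrow> U a b = 0"
  using prop_leD[OF pU] by simp

lemma Q_herm: "Q n b a = cnj (Q n a b)"
  unfolding Q_def by (simp add: mult.commute)

lemma Q2:
  assumes a: "a \<in> J n"
  shows "Q n a c + Q (n+1) a c = idm a c"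
proof -
  have un: "I n \<union> I (n+1) = {M*n - L ..< M*n + M + L}"
    unfolding I_def M_def using L1 by (auto simp: algebra_simps)
  have dis: "I n \<inter> I (n+1) = {}"
    unfolding I_def M_def using L1 by (auto simp: algebra_simps)
  have "Q n a c + Q (n+1) a c = (\<Sum>k\<in>I n \<union> I (n+1). U a k * cnj (U c k))"
    unfolding Q_def by (rule sum.union_disjoint[symmetric]) (use dis in auto)
  also have "\<dots> = idm a c"
    unfolding un by (rule row) (use a L1 in \<open>auto simp: J_def M_def\<close>)
  finally show ?thesis .
qed

lemma Q3:
  assumes a: "a \<in> J n" and c: "c \<notin> J n"
  shows "Q n a c = 0"
proof (cases "c < M*n")
  case True
  have "Q (n+1) a c = 0"
    unfolding Q_def
  proof (rule sum.neutral, rule ballI)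
    fix k assume "k \<in> I (n+1)"
    then have "\<bar>c - k\<bar> > L" using True L1 unfolding I_def M_def by (auto simp: algebra_simps)
    then show "U a k * cnj (U c k) = 0" using zeroU by simp
  qed
  moreover have "idm a c = 0" using a True unfolding idm_def J_def by auto
  ultimately show ?thesis using Q2[OF a, of c] by simp
next
  case False
  then have c2: "c \<ge> M*n + M" using c unfolding J_def by auto
  show ?thesis
    unfolding Q_def
  proof (rule sum.neutral, rule ballI)
    fix k assume "k \<in> I n"
    then have "\<bar>c - k\<bar> > L" using c2 L1 unfolding I_def M_def by (auto simp: algebra_simps)
    then show "U a k * cnj (U c k) = 0" using zeroU by simp
  qed
qed

lemma Q3': "b \<in> J n \<Longrightarrow> c \<notin> J n \<Longrightarrow> Q n c b = 0"
  using Q3 Q_herm by (metis complex_cnj_zero)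

lemma G:
  assumes b: "b \<in> J n"
  shows "(\<Sum>a\<in>J n. Q n b a * U a j) = (if j \<in> I n then U b j else 0)"
proof -
  define W where "W = {M*n - M ..< M*n + M}"
  have finW: "finite W" unfolding W_def by simp
  have JW: "J n \<subseteq> W" unfolding W_def J_def using Mpos by auto
  have "(\<Sum>a\<in>J n. Q n b a * U a j) = (\<Sum>a\<in>W. Q n b a * U a j)"
    by (rule sum.mono_neutral_left[OF finW JW]) (use Q3[OF b] in auto)
  also have "\<dots> = (\<Sum>a\<in>W. \<Sum>k\<in>I n. U b k * (cnj (U a k) * U a j))"
    unfolding Q_def by (simp add: sum_distrib_right mult.assoc)
  also have "\<dots> = (\<Sum>k\<in>I n. \<Sum>a\<in>W. U b k * (cnj (U a k) * U a j))" by (rule sum.swap)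
  also have "\<dots> = (\<Sum>k\<in>I n. U b k * idm k j)"
  proof (intro sum.cong refl)
    fix k assume k: "k \<in> I n"
    have "{k-L..k+L} \<subseteq> W" using k L1 unfolding W_def I_def M_def by auto
    then have "(\<Sum>a\<in>W. cnj (U a k) * U a j) = idm k j" by (rule col[OF finW])
    then show "(\<Sum>a\<in>W. U b k * (cnj (U a k) * U a j)) = U b k * idm k j"
      by (simp add: sum_distrib_left[symmetric])
  qed
  also have "\<dots> = (if j \<in> I n then U b j else 0)"
    unfolding idm_def by (simp add: if_distrib cong: if_cong)
  finally show ?thesis .
qed

lemma Q4:
  assumes a: "a \<in> J n" and b: "b \<in> J n"
  shows "(\<Sum>c\<in>J n. Q n a c * Q n c b) = Q n a b"
proof -
  have "(\<Sum>c\<in>J n. Q n a c * Q n c b) = (\<Sum>c\<in>J n. \<Sum>k\<in>I n. Q n a c * U c k * cnj (U b k))"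
    unfolding Q_def[of n _ b] by (simp add: sum_distrib_left mult.assoc)
  also have "\<dots> = (\<Sum>k\<in>I n. \<Sum>c\<in>J n. Q n a c * U c k * cnj (U b k))" by (rule sum.swap)
  also have "\<dots> = (\<Sum>k\<in>I n. (\<Sum>c\<in>J n. Q n a c * U c k) * cnj (U b k))"
    by (simp add: sum_distrib_right)
  also have "\<dots> = (\<Sum>k\<in>I n. U a k * cnj (U b k))"
    by (intro sum.cong refl) (simp add: G[OF a])
  finally show ?thesis unfolding Q_def .
qed

definition tr :: "int \<Rightarrow> complex" where "tr n = (\<Sum>a\<in>J n. Q n a a)"

lemma tr_step: "tr n = tr (n+1)"
proof -
  have cardJ: "card (J n) = nat M" unfolding J_def by simp
  have cardI: "card (I (n+1)) = nat M" unfolding I_def M_def by simp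
  have T2: "(\<Sum>a\<in>J n. Q n a a + Q (n+1) a a) = of_nat (nat M)"
    using Q2[of _ n] cardJ by (simp add: idm_def)
  have un: "J n \<union> J (n+1) = {M*n ..< M*n + 2*M}"
    unfolding J_def using Mpos by (auto simp: algebra_simps)
  have dis: "J n \<inter> J (n+1) = {}" unfolding J_def using Mpos by (auto simp: algebra_simps)
  have "(\<Sum>c\<in>J n \<union> J (n+1). Q (n+1) c c) = (\<Sum>c\<in>J n \<union> J (n+1). \<Sum>k\<in>I (n+1). cnj (U c k) * U c k)"
    unfolding Q_def by (simp add: mult.commute)
  also have "\<dots> = (\<Sum>k\<in>I (n+1). \<Sum>c\<in>J n \<union> J (n+1). cnj (U c k) * U c k)" by (rule sum.swap)
  also have "\<dots> = (\<Sum>k\<in>I (n+1). 1)"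
  proof (intro sum.cong refl)
    fix k assume k: "k \<in> I (n+1)"
    have "{k-L..k+L} \<subseteq> J n \<union> J (n+1)" unfolding un using k L1 unfolding I_def M_def
      by (auto simp: algebra_simps)
    then show "(\<Sum>c\<in>J n \<union> J (n+1). cnj (U c k) * U c k) = 1"
      using col[of "J n \<union> J (n+1)" k k] by (simp add: idm_def)
  qed
  finally have T1: "(\<Sum>c\<in>J n. Q (n+1) c c) + tr (n+1) = of_nat (nat M)"
    unfolding tr_def using cardI by (simp add: sum.union_disjoint[OF finJ finJ dis])
  have T3: "tr n + (\<Sum>c\<in>J n. Q (n+1) c c) = of_nat (nat M)"
    using T2 unfolding tr_def by (simp add: sum.distrib)
  have "tr n + (\<Sum>c\<in>J n. Q (n+1) c c) = tr (n+1) + (\<Sum>c\<in>J n. Q (n+1) c c)"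
    using T1 T3 by (simp only: add.commute)
  then show ?thesis by (rule add_right_imp_eq)
qed

lemma tr_const: "tr n = tr 0"
proof (induction n rule: int_induct[where k=0])
  case base then show ?case by simp
next
  case (step1 i) then show ?case using tr_step[of i] by simp
next
  case (step2 i) then show ?case using tr_step[of "i - 1"] by simp
qed

lemma ind_tr: "tr 0 = complex_of_real (real_of_int L - ind U)"
proof -
  define N where "N a k = (cmod (U a k))\<^sup>2" for a k
  have N0: "N a k = 0" if "\<bar>a - k\<bar> > L" for a k unfolding N_def using zeroU[OF that] by simp
  define A where "A = (\<Sum>i\<in>{-L..<0}. \<Sum>j\<in>{0..<L}. N i j)"
  define B where "B = (\<Sum>i\<in>{0..<L}. \<Sum>j\<in>{-L..<0}. N i j)"
  have iA: "(\<Sum>\<^sub>\<infinity>(i,j)\<in>{(i,j). i < 0 \<and> j \<ge> 0}. (cmod (U i j))\<^sup>2) = A"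
  proof -
    have "(\<Sum>\<^sub>\<infinity>(i,j)\<in>{(i,j). i < 0 \<and> j \<ge> 0}. (cmod (U i j))\<^sup>2) = (\<Sum>\<^sub>\<infinity>(i,j)\<in>{-L..<0} \<times> {0..<L}. N i j)"
    proof (rule infsum_cong_neutral)
      fix x assume h: "x \<in> {(i, j). i < 0 \<and> 0 \<le> j} - {-L..<0} \<times> {0..<L}"
      obtain i j where x: "x = (i,j)" by (cases x)
      from h have "i < 0" "0 \<le> j" "\<not> (-L \<le> i \<and> j < L)" unfolding x by auto
      then have "\<bar>i - j\<bar> > L" by auto
      then show "(case x of (i, j) \<Rightarrow> (cmod (U i j))\<^sup>2) = 0" using zeroU x(1) by simp
    qed (auto simp: N_def)
    also have "\<dots> = (\<Sum>(i,j)\<in>{-L..<0} \<times> {0..<L}. N i j)" by (rule infsum_finite) simp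
    also have "\<dots> = A" unfolding A_def by (rule sum.cartesian_product[symmetric])
    finally show ?thesis .
  qed
  have iB: "(\<Sum>\<^sub>\<infinity>(i,j)\<in>{(i,j). i \<ge> 0 \<and> j < 0}. (cmod (U i j))\<^sup>2) = B"
  proof -
    have "(\<Sum>\<^sub>\<infinity>(i,j)\<in>{(i,j). i \<ge> 0 \<and> j < 0}. (cmod (U i j))\<^sup>2) = (\<Sum>\<^sub>\<infinity>(i,j)\<in>{0..<L} \<times> {-L..<0}. N i j)"
    proof (rule infsum_cong_neutral)
      fix x assume h: "x \<in> {(i, j). 0 \<le> i \<and> j < 0} - {0..<L} \<times> {-L..<0}"
      obtain i j where x: "x = (i,j)" by (cases x)
      from h have "0 \<le> i" "j < 0" "\<not> (i < L \<and> -L \<le> j)" unfolding x by auto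
      then have "\<bar>i - j\<bar> > L" by auto
      then show "(case x of (i, j) \<Rightarrow> (cmod (U i j))\<^sup>2) = 0" using zeroU x(1) by simp
    qed (auto simp: N_def)
    also have "\<dots> = (\<Sum>(i,j)\<in>{0..<L} \<times> {-L..<0}. N i j)" by (rule infsum_finite) simp
    also have "\<dots> = B" unfolding B_def by (rule sum.cartesian_product[symmetric])
    finally show ?thesis .
  qed
  have ind: "ind U = A - B" unfolding ind_def iA iB ..
  have L0: "L \<ge> 0" using L1 by simp
  have LleM: "L \<le> M" unfolding M_def using L1 by simp
  define S where "S = (\<Sum>a\<in>{0..<M}. \<Sum>k\<in>{-L..<L}. N a k)"
  have trS: "tr 0 = complex_of_real S"
    unfolding tr_def Q_def S_def N_def J_def I_def by (simp add: mult_cnj_self)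
  have "S = (\<Sum>a\<in>{0..<M}. \<Sum>k\<in>{-L..<0}. N a k) + (\<Sum>a\<in>{0..<M}. \<Sum>k\<in>{0..<L}. N a k)"
    unfolding S_def using L0 by (simp add: ivl_split_int[of "-L" 0 L] sum.distrib)
  also have "(\<Sum>a\<in>{0..<M}. \<Sum>k\<in>{-L..<0}. N a k) = B"
  proof -
    have "(\<Sum>a\<in>{0..<M}. \<Sum>k\<in>{-L..<0}. N a k) = (\<Sum>a\<in>{0..<L}. \<Sum>k\<in>{-L..<0}. N a k) + (\<Sum>a\<in>{L..<M}. \<Sum>k\<in>{-L..<0}. N a k)"
      by (rule ivl_split_int[OF L0 LleM])
    also have "(\<Sum>a\<in>{L..<M}. \<Sum>k\<in>{-L..<0}. N a k) = 0"
      by (intro sum.neutral ballI) (auto intro!: N0)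
    finally show ?thesis unfolding B_def by simp
  qed
  also have "(\<Sum>a\<in>{0..<M}. \<Sum>k\<in>{0..<L}. N a k) = real_of_int L - A"
  proof -
    have c1: "(\<Sum>a\<in>{-L..<0}. N a k) + (\<Sum>a\<in>{0..<M}. N a k) = 1" if k: "k \<in> {0..<L}" for k
    proof -
      have sub: "{k-L..k+L} \<subseteq> {-L..<M}" using k unfolding M_def by auto
      have e1: "(\<Sum>a\<in>{-L..<M}. cnj (U a k) * U a k) = 1"
        using col[OF _ sub, of k] unfolding idm_def by simp
      have e2: "(\<Sum>a\<in>{-L..<M}. cnj (U a k) * U a k) = complex_of_real (\<Sum>a\<in>{-L..<M}. N a k)"
        unfolding N_def of_real_sum by (simp only: cnj_mult_self)
      have e3: "(\<Sum>a\<in>{-L..<M}. N a k) = 1" using e1 e2 by (metis of_real_eq_1_iff)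
      have "(\<Sum>a\<in>{-L..<M}. N a k) = (\<Sum>a\<in>{-L..<0}. N a k) + (\<Sum>a\<in>{0..<M}. N a k)"
        by (rule ivl_split_int) (use L0 Mpos in auto)
      then show ?thesis using e3 by simp
    qed
    have "(\<Sum>a\<in>{0..<M}. \<Sum>k\<in>{0..<L}. N a k) = (\<Sum>k\<in>{0..<L}. \<Sum>a\<in>{0..<M}. N a k)"
      by (rule sum.swap)
    also have "\<dots> = (\<Sum>k\<in>{0..<L}. 1 - (\<Sum>a\<in>{-L..<0}. N a k))"
    proof (intro sum.cong refl)
      fix k assume "k \<in> {0..<L}"
      from c1[OF this] show "(\<Sum>a\<in>{0..<M}. N a k) = 1 - (\<Sum>a\<in>{-L..<0}. N a k)" by (simp add: algebra_simps)
    qed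
    also have "\<dots> = real_of_int L - (\<Sum>k\<in>{0..<L}. \<Sum>a\<in>{-L..<0}. N a k)"
      using L0 by (simp add: sum_subtractf)
    also have "(\<Sum>k\<in>{0..<L}. \<Sum>a\<in>{-L..<0}. N a k) = A" unfolding A_def by (rule sum.swap)
    finally show ?thesis .
  qed
  finally have "S = B + (real_of_int L - A)" .
  then show ?thesis using trS ind by simp
qed

end



context qw
begin

lemma J_iff: "k \<in> J n \<longleftrightarrow> k div M = n"
  unfolding J_def using div_iff_int[OF Mpos, of k n] by auto

lemma in_J_div: "k \<in> J (k div M)" using J_iff by simp

lemma mod_J: "k \<in> J n \<Longrightarrow> k mod M = k - M * n"
  using J_iff by (metis minus_mult_div_eq_mod mult.commute)

lemma natM: "nat M = 2 * nat L" unfolding M_def using L1 by simp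

lemma cardJ: "card (J n) = 2 * nat L" unfolding J_def using natM by simp

lemma reindexJ: "(\<Sum>k\<in>J n. g (nat (k mod M))) = (\<Sum>p\<in>{0..<2 * nat L}. g p)"
proof (rule sum.reindex_bij_witness[where i="\<lambda>p. M*n + int p" and j="\<lambda>k. nat (k mod M)"])
  fix k assume k: "k \<in> J n"
  have km: "k mod M = k - M * n" by (rule mod_J[OF k])
  show "M * n + int (nat (k mod M)) = k" using k km unfolding J_def by auto
  show "nat (k mod M) \<in> {0..<2 * nat L}" using k km natM unfolding J_def by auto
next
  fix p assume p: "p \<in> {0..<2 * nat L}"
  have pin: "M * n + int p \<in> J n" using p natM Mpos unfolding J_def by auto
  show "M * n + int p \<in> J n" by (rule pin)
  show "nat ((M * n + int p) mod M) = p" using mod_J[OF pin] by simp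
qed simp

end

locale qw0 = qw +
  assumes ind0: "ind U = 0"
begin

lemma trn: "tr n = of_nat (nat L)"
  using tr_const[of n] ind_tr ind0 L1 by simp

definition BP :: "int \<Rightarrow> (nat \<Rightarrow> int \<Rightarrow> complex) \<Rightarrow> bool" where
  "BP n c \<longleftrightarrow> (\<forall>p<2*nat L. \<forall>q<2*nat L. ip (J n) (c p) (c q) = (if p = q then 1 else 0)) \<and>
     (\<forall>a\<in>J n. \<forall>b\<in>J n. (\<Sum>p\<in>{0..<2*nat L}. c p a * cnj (c p b)) = (if a = b then 1 else 0)) \<and>
     (\<forall>p<nat L. \<forall>a\<in>J n. rapp (J n) (Q n) (c p) a = c p a) \<and>
     (\<forall>p. nat L \<le> p \<and> p < 2*nat L \<longrightarrow> (\<forall>a\<in>J n. rapp (J n) (Q n) (c p) a = 0))"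

lemma exBP: "\<exists>c. BP n c"
proof -
  have h: "\<And>a b. a \<in> J n \<Longrightarrow> b \<in> J n \<Longrightarrow> Q n b a = cnj (Q n a b)" by (rule Q_herm)
  have t: "(\<Sum>a\<in>J n. Q n a a) = of_nat (nat L)" using trn unfolding tr_def .
  show ?thesis unfolding BP_def by (rule block_basis[OF finJ cardJ h Q4 t])
qed

definition C :: "int \<Rightarrow> nat \<Rightarrow> int \<Rightarrow> complex" where "C n = (SOME c. BP n c)"

lemma BP_C: "BP n (C n)"
  unfolding C_def by (rule someI_ex[OF exBP])

lemma C1: "p < 2*nat L \<Longrightarrow> q < 2*nat L \<Longrightarrow> ip (J n) (C n p) (C n q) = (if p = q then 1 else 0)"
  using BP_C[of n] unfolding BP_def by blast
lemma C2: "a \<in> J n \<Longrightarrow> b \<in> J n \<Longrightarrow> (\<Sum>p\<in>{0..<2*nat L}. C n p a * cnj (C n p b)) = (if a = b then 1 else 0)"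
  using BP_C[of n] unfolding BP_def by blast
lemma C3: "p < nat L \<Longrightarrow> a \<in> J n \<Longrightarrow> rapp (J n) (Q n) (C n p) a = C n p a"
  using BP_C[of n] unfolding BP_def by blast
lemma C4: "nat L \<le> p \<Longrightarrow> p < 2*nat L \<Longrightarrow> a \<in> J n \<Longrightarrow> rapp (J n) (Q n) (C n p) a = 0"
  using BP_C[of n] unfolding BP_def by blast

definition V :: zmat where
  "V i j = (if i div M = j div M then C (j div M) (nat (j mod M)) i else 0)"

lemma V_same: "k \<in> J n \<Longrightarrow> j \<in> J n \<Longrightarrow> V k j = C n (nat (j mod M)) k"
  unfolding V_def using J_iff by simp

lemma V_diff: "k \<in> J n \<Longrightarrow> j \<notin> J n \<Longrightarrow> V k j = 0 \<and> V j k = 0"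
  unfolding V_def using J_iff by auto

lemma modlt: "j \<in> J n \<Longrightarrow> nat (j mod M) < 2 * nat L"
  using mod_J[of j n] natM unfolding J_def by auto

lemma VVa: "mmult V (adj V) = idm"
proof (intro ext)
  fix i j
  define n where "n = i div M"
  have i: "i \<in> J n" unfolding n_def by (rule in_J_div)
  have "mmult V (adj V) i j = (\<Sum>k\<in>J n. V i k * cnj (V j k))"
    unfolding mmult_def adj_def by (rule infsum_fin) (use V_diff[OF i] in auto)
  also have "\<dots> = idm i j"
  proof (cases "j \<in> J n")
    case True
    have "(\<Sum>k\<in>J n. V i k * cnj (V j k)) = (\<Sum>k\<in>J n. C n (nat (k mod M)) i * cnj (C n (nat (k mod M)) j))"
      by (intro sum.cong refl) (simp add: V_same[OF i] V_same[OF True])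
    also have "\<dots> = (\<Sum>p\<in>{0..<2 * nat L}. C n p i * cnj (C n p j))"
      by (rule reindexJ)
    also have "\<dots> = idm i j" unfolding idm_def by (rule C2[OF i True])
    finally show ?thesis .
  next
    case False
    then have "i \<noteq> j" using i by auto
    then show ?thesis using V_diff[OF _ False] unfolding idm_def by (auto intro!: sum.neutral)
  qed
  finally show "mmult V (adj V) i j = idm i j" .
qed

lemma VaV: "mmult (adj V) V = idm"
proof (intro ext)
  fix i j
  define n where "n = i div M"
  have i: "i \<in> J n" unfolding n_def by (rule in_J_div)
  have "mmult (adj V) V i j = (\<Sum>k\<in>J n. cnj (V k i) * V k j)"
    unfolding mmult_def adj_def by (rule infsum_fin) (use V_diff[OF i] in auto)
  also have "\<dots> = idm i j"
  proof (cases "j \<in> J n")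
    case True
    have "(\<Sum>k\<in>J n. cnj (V k i) * V k j) = ip (J n) (C n (nat (i mod M))) (C n (nat (j mod M)))"
      unfolding ip_def by (intro sum.cong refl) (simp add: V_same[OF _ i] V_same[OF _ True])
    also have "\<dots> = (if nat (i mod M) = nat (j mod M) then 1 else 0)"
      by (rule C1[OF modlt[OF i] modlt[OF True]])
    also have "\<dots> = idm i j"
    proof -
      have m0: "0 \<le> i mod M" "0 \<le> j mod M" using Mpos by simp_all
      have "nat (i mod M) = nat (j mod M) \<longleftrightarrow> i mod M = j mod M" using m0 by (metis nat_eq_iff2)
      also have "\<dots> \<longleftrightarrow> i = j" unfolding mod_J[OF i] mod_J[OF True] by simp
      finally have "nat (i mod M) = nat (j mod M) \<longleftrightarrow> i = j" .
      then show ?thesis unfolding idm_def by simp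
    qed
    finally show ?thesis .
  next
    case False
    then have "i \<noteq> j" using i by auto
    then show ?thesis using V_diff[OF _ False] unfolding idm_def by (auto intro!: sum.neutral)
  qed
  finally show "mmult (adj V) V i j = idm i j" .
qed

lemma pV: "prop_le V M"
  unfolding prop_le_def
proof (intro allI impI)
  fix i j assume "V i j \<noteq> 0"
  then have "i div M = j div M" unfolding V_def by (auto split: if_splits)
  then have "i \<in> J (j div M)" "j \<in> J (j div M)" using J_iff by auto
  then show "\<bar>i - j\<bar> \<le> M" unfolding J_def by auto
qed

definition W :: zmat where "W = mmult (adj V) U"

lemma W_ip: "W i j = ip (J (i div M)) (C (i div M) (nat (i mod M))) (\<lambda>k. U k j)"
proof -
  define n where "n = i div M"
  have i: "i \<in> J n" unfolding n_def by (rule in_J_div)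
  have "W i j = (\<Sum>k\<in>J n. cnj (V k i) * U k j)"
    unfolding W_def mmult_def adj_def by (rule infsum_fin) (use V_diff[OF i] in auto)
  also have "\<dots> = ip (J n) (C n (nat (i mod M))) (\<lambda>k. U k j)"
    unfolding ip_def by (intro sum.cong refl) (simp add: V_same[OF _ i])
  finally show ?thesis unfolding n_def .
qed

lemma G': "b \<in> J n \<Longrightarrow> rapp (J n) (Q n) (\<lambda>k. U k j) b = (if j \<in> I n then U b j else 0)"
  unfolding rapp_def by (rule G)

lemma W_block:
  assumes nz: "W i j \<noteq> 0"
  shows "\<exists>n'. -L + n'*M \<le> i \<and> i < -L + (n'+1)*M \<and> -L + n'*M \<le> j \<and> j < -L + (n'+1)*M"
proof -
  define n where "n = i div M"
  define p where "p = nat (i mod M)"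
  define c where "c = C n p"
  define u where "u = (\<lambda>k. U k j)"
  have i: "i \<in> J n" unfolding n_def by (rule in_J_div)
  have im: "i mod M = i - M * n" by (rule mod_J[OF i])
  have p2: "p < 2 * nat L" unfolding p_def by (rule modlt[OF i])
  have Wc: "W i j = ip (J n) c u" unfolding W_ip c_def u_def n_def p_def ..
  have herm: "\<And>a b. a \<in> J n \<Longrightarrow> b \<in> J n \<Longrightarrow> Q n b a = cnj (Q n a b)" by (rule Q_herm)
  have L0: "L \<ge> 1" by (rule L1)
  show ?thesis
  proof (cases "p < nat L")
    case True
    have jI: "j \<in> I n"
    proof (rule ccontr)
      assume nj: "j \<notin> I n"
      have "ip (J n) c u = ip (J n) (rapp (J n) (Q n) c) u"
        by (rule ip_cong_left) (use C3[OF True] in \<open>simp add: c_def\<close>)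
      also have "\<dots> = ip (J n) c (rapp (J n) (Q n) u)" by (rule ip_selfadj[OF herm])
      also have "\<dots> = ip (J n) c (\<lambda>_. 0)" by (rule ip_cong) (use G' nj in \<open>simp add: u_def\<close>)
      also have "\<dots> = 0" unfolding ip_def by simp
      finally show False using nz Wc by simp
    qed
    have "i - M * n < L" using True im unfolding p_def by linarith
    then have "i \<in> I n" using i L0 unfolding I_def J_def by auto
    then show ?thesis using jI unfolding I_def M_def by (intro exI[of _ n]) (auto simp: algebra_simps)
  next
    case False
    have jI: "j \<in> I (n+1)"
    proof (rule ccontr)
      assume nj: "j \<notin> I (n+1)"
      have "ip (J n) c u = 0"
      proof (cases "j \<in> I n")
        case True
        have "ip (J n) c u = ip (J n) c (rapp (J n) (Q n) u)"
          by (rule ip_cong) (use G' True in \<open>simp add: u_def\<close>)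
        also have "\<dots> = ip (J n) (rapp (J n) (Q n) c) u" by (rule ip_selfadj[OF herm, symmetric])
        also have "\<dots> = ip (J n) (\<lambda>_. 0) u"
          by (rule ip_cong_left) (use C4[OF _ p2] False in \<open>simp add: c_def\<close>)
        also have "\<dots> = 0" unfolding ip_def by simp
        finally show ?thesis .
      next
        case nI: False
        have "ip (J n) c u = ip (J n) c (\<lambda>_. 0)"
        proof (rule ip_cong)
          fix b assume b: "b \<in> J n"
          have "\<bar>b - j\<bar> > L" using b nI nj L0 unfolding J_def I_def M_def by (auto simp: algebra_simps)
          then show "u b = 0" unfolding u_def by (rule zeroU)
        qed
        then show ?thesis unfolding ip_def by simp
      qed
      then show False using nz Wc by simp
    qed
    have "i - M * n \<ge> L" using False im L0 unfolding p_def by linarith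
    then have "i \<in> I (n+1)" using i L0 unfolding I_def J_def M_def by (auto simp: algebra_simps)
    then show ?thesis using jI unfolding I_def M_def by (intro exI[of _ "n+1"]) (auto simp: algebra_simps)
  qed
qed

lemma M0: "M \<ge> 0" using Mpos by simp
lemma L0': "L \<ge> 0" using L1 by simp

lemma adjW: "adj W = mmult (adj U) V"
  unfolding W_def using adj_mmult[OF prop_adj[OF pV], of U] by simp

lemma pW: "prop_le W (M + L)"
  unfolding W_def by (rule prop_mmult[OF prop_adj[OF pV] pU])

lemma WWa: "mmult W (adj W) = idm"
proof -
  have "mmult W (adj W) = mmult (mmult (adj V) U) (mmult (adj U) V)" unfolding adjW by (simp only: W_def)
  also have "\<dots> = mmult (adj V) (mmult U (mmult (adj U) V))"
    by (rule mmult_assoc[OF prop_adj[OF pV] pU prop_mmult[OF prop_adj[OF pU] pV] M0 L0']) (use M0 L0' in simp)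
  also have "mmult U (mmult (adj U) V) = mmult (mmult U (adj U)) V"
    by (rule mmult_assoc[OF pU prop_adj[OF pU] pV L0' L0' M0, symmetric])
  finally show ?thesis using uu VaV by simp
qed

lemma WaW: "mmult (adj W) W = idm"
proof -
  have "mmult (adj W) W = mmult (mmult (adj U) V) (mmult (adj V) U)" unfolding adjW by (simp only: W_def)
  also have "\<dots> = mmult (adj U) (mmult V (mmult (adj V) U))"
    by (rule mmult_assoc[OF prop_adj[OF pU] pV prop_mmult[OF prop_adj[OF pV] pU] L0' M0]) (use M0 L0' in simp)
  also have "mmult V (mmult (adj V) U) = mmult (mmult V (adj V)) U"
    by (rule mmult_assoc[OF pV prop_adj[OF pV] pU M0 M0 L0', symmetric])
  finally show ?thesis using uu' VVa by simp
qed

lemma U_VW: "U = mmult V W"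
proof -
  have "mmult V W = mmult (mmult V (adj V)) U"
    unfolding W_def by (rule mmult_assoc[OF pV prop_adj[OF pV] pU M0 M0 L0', symmetric])
  then show ?thesis using VVa by simp
qed

lemma main: "V \<in> unitary_block 0 M \<and> W \<in> unitary_block (-L) M \<and> U = mmult V W"
proof (intro conjI U_VW)
  have bV: "bounded_op V"
    by (rule bounded_fp[OF pV M0]) (rule entry_le1[OF pV VaV])
  have bW: "bounded_op W"
    by (rule bounded_fp[OF pW]) (use M0 L0' entry_le1[OF pW WaW] in auto)
  have blV: "\<exists>n. 0 + n*M \<le> i \<and> i < 0 + (n+1)*M \<and> 0 + n*M \<le> j \<and> j < 0 + (n+1)*M"
    if "V i j \<noteq> 0" for i j
  proof -
    from that have "i div M = j div M" unfolding V_def by (auto split: if_splits)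
    then have "i \<in> J (j div M)" "j \<in> J (j div M)" using J_iff by auto
    then show ?thesis unfolding J_def by (intro exI[of _ "j div M"]) (auto simp: algebra_simps)
  qed
  show "V \<in> unitary_block 0 M"
    unfolding unitary_block_def block_diag_def unitary_op_def using bV VVa VaV blV by auto
  show "W \<in> unitary_block (-L) M"
    unfolding unitary_block_def block_diag_def unitary_op_def using bW WWa WaW W_block by auto
qed

end

theorem theorem2p8:
  fixes U :: zmat and L :: int
  assumes "L \<ge> 1" and "U \<in> fp_unitaries" and "ind U = 0" and "prop_le U L"
  shows "\<exists>V W. V \<in> unitary_block 0 (2*L) \<and> W \<in> unitary_block (-L) (2*L) \<and> U = mmult V W"
proof -
  have u: "mmult U (adj U) = idm" "mmult (adj U) U = idm"
    using assms(2) unfolding fp_unitaries_def unitary_op_def by auto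
  interpret qw0 U L
    by unfold_locales (use assms u in auto)
  show ?thesis using main unfolding M_def by blast
qed

end
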